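(* Let $G$ be a finite group and $n\ge1$. Every linear character of $HG_n$ is of the form $\Theta_{\xi,\pi}$ for some $\xi\in\mathcal{L}(G)$ and $\pi\in\mathcal{L}(H_n)$, i.e. $\mathcal{L}(HG_n)=\{\Theta_{\xi,\pi}\mid\xi\in\mathcal{L}(G),\ \pi\in\mathcal{L}(H_n)\}$.
   Context: $\mathcal{L}(X)$ denotes the set of linear characters of a group $X$. $SG_{2n}=G\wr S_{2n}=\{(g_1,\dots,g_{2n};\sigma)\}$ with multiplication $(g;\sigma)(h;\tau)=(g_1h_{\sigma^{-1}(1)},\dots,g_{2n}h_{\sigma^{-1}(2n)};\sigma\tau)$. $H_n\subset S_{2n}$ is the hyperoctahedral group (centralizer of $(12)(34)\cdots(2n-1\,2n)$), whose linear characters are $1,\delta,\iota,\delta\otimes\iota$ with $\delta$ the restriction of the sign of $S_{2n}$ and $\iota(\sigma)$ the sign of the permutation of the blocks $\{1,2\},\dots,\{2n-1,2n\}$ induced by $\sigma$. $HG_n=\{(g_1,g_1,\dots,g_n,g_n;\sigma)\mid g_i\in G,\sigma\in H_n\}$ and $\Theta_{\xi,\pi}(g_1,g_1,\dots,g_n,g_n;\sigma)=\xi(g_1g_2\cdots g_n)\pi(\sigma)$. *)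

theory Defs
  imports "HOL-Algebra.Algebra" "HOL-Combinatorics.Permutations" "HOL-Library.FuncSet"
begin

definition lin_chars :: "('g, 'b) monoid_scheme \<Rightarrow> ('g \<Rightarrow> complex) set" where
  "lin_chars K = {c \<in> carrier K \<rightarrow>\<^sub>E (UNIV - {0}).
      \<forall>x\<in>carrier K. \<forall>y\<in>carrier K. c (x \<otimes>\<^bsub>K\<^esub> y) = c x * c y}"

definition SG :: "('a, 'b) monoid_scheme \<Rightarrow> nat \<Rightarrow> ((nat \<Rightarrow> 'a) \<times> (nat \<Rightarrow> nat)) monoid" where
  "SG G n = \<lparr>carrier = {(g, \<sigma>). g \<in> {1..2*n} \<rightarrow>\<^sub>E carrier G \<and> \<sigma> permutes {1..2*n}},
     monoid.mult = (\<lambda>(g, \<sigma>) (h, \<tau>). ((\<lambda>i\<in>{1..2*n}. g i \<otimes>\<^bsub>G\<^esub> h (Hilbert_Choice.inv \<sigma> i)), \<sigma> \<circ> \<tau>)),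
     one = ((\<lambda>i\<in>{1..2*n}. \<one>\<^bsub>G\<^esub>), id)\<rparr>"

definition w0 :: "nat \<Rightarrow> nat \<Rightarrow> nat" where
  "w0 n i = (if i \<in> {1..2*n} then (if odd i then i + 1 else i - 1) else i)"

definition Hn :: "nat \<Rightarrow> (nat \<Rightarrow> nat) monoid" where
  "Hn n = \<lparr>carrier = {\<sigma>. \<sigma> permutes {1..2*n} \<and> \<sigma> \<circ> w0 n = w0 n \<circ> \<sigma>},
     monoid.mult = (\<circ>), one = id\<rparr>"

definition HG :: "('a, 'b) monoid_scheme \<Rightarrow> nat \<Rightarrow> ((nat \<Rightarrow> 'a) \<times> (nat \<Rightarrow> nat)) monoid" where
  "HG G n = (SG G n)\<lparr>carrier := {(g, \<sigma>). g \<in> {1..2*n} \<rightarrow>\<^sub>E carrier G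
       \<and> (\<forall>i\<in>{1..n}. g (2*i - 1) = g (2*i)) \<and> \<sigma> \<in> carrier (Hn n)}\<rparr>"

definition oprod :: "('a, 'b) monoid_scheme \<Rightarrow> (nat \<Rightarrow> 'a) \<Rightarrow> nat \<Rightarrow> 'a" where
  "oprod G f n = foldr (\<lambda>i a. f i \<otimes>\<^bsub>G\<^esub> a) [1..<Suc n] \<one>\<^bsub>G\<^esub>"

definition Theta :: "('a, 'b) monoid_scheme \<Rightarrow> nat \<Rightarrow> ('a \<Rightarrow> complex) \<Rightarrow> ((nat \<Rightarrow> nat) \<Rightarrow> complex)
    \<Rightarrow> ((nat \<Rightarrow> 'a) \<times> (nat \<Rightarrow> nat)) \<Rightarrow> complex" where
  "Theta G n \<xi> \<pi> = (\<lambda>x\<in>carrier (HG G n).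
      \<xi> (oprod G (\<lambda>i. fst x (2*i - 1)) n) * \<pi> (snd x))"

end

theory Submission
  imports Defs
begin

lemma HG_carrier: "carrier (HG G n) = {(g, \<sigma>). g \<in> {1..2*n} \<rightarrow>\<^sub>E carrier G
       \<and> (\<forall>i\<in>{1..n}. g (2*i - 1) = g (2*i)) \<and> \<sigma> \<in> carrier (Hn n)}"
  by (simp add: HG_def)

lemma HG_mult: "(g,\<sigma>) \<otimes>\<^bsub>HG G n\<^esub> (h,\<tau>) =
   ((\<lambda>i\<in>{1..2*n}. g i \<otimes>\<^bsub>G\<^esub> h (Hilbert_Choice.inv \<sigma> i)), \<sigma> \<circ> \<tau>)"
  by (simp add: HG_def SG_def)

lemma Hn_carrier: "carrier (Hn n) = {\<sigma>. \<sigma> permutes {1..2*n} \<and> \<sigma> \<circ> w0 n = w0 n \<circ> \<sigma>}"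
  by (simp add: Hn_def)

lemma Hn_mult: "x \<otimes>\<^bsub>Hn n\<^esub> y = x \<circ> y"
  by (simp add: Hn_def)

lemma w0_in: "j \<in> {1..2*n} \<Longrightarrow> w0 n j \<in> {1..2*n}"
  unfolding w0_def by (auto; presburger)

lemma w0_odd: "i \<in> {1..n} \<Longrightarrow> w0 n (2*i-1) = 2*i"
  unfolding w0_def by auto

lemma w0_even: "i \<in> {1..n} \<Longrightarrow> w0 n (2*i) = 2*i-1"
  unfolding w0_def by auto

lemma pair_w0: assumes "\<forall>i\<in>{1..n}. g (2*i - 1) = g (2*i)" "j \<in> {1..2*n}"
  shows "g (w0 n j) = g j"
proof (cases "odd j")
  case True
  then obtain k where "j = 2*k+1" by (auto elim!: oddE)
  then have i: "j = 2*(k+1)-1" "k+1 \<in> {1..n}" using assms(2) by auto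
  have e: "g (2*(k+1)-1) = g (2*(k+1))" using assms(1) i(2) by blast
  show ?thesis using e w0_odd[OF i(2)] i(1) by simp
next
  case False
  then obtain i where i: "j = 2*i" "i \<in> {1..n}" using assms(2) by (auto elim!: evenE)
  then show ?thesis using assms w0_even by auto
qed

lemma rep_eq: assumes "\<forall>i\<in>{1..n}. g (2*i - 1) = g (2*i)" "j \<in> {1..2*n}"
  shows "g j = g (2 * (((j::nat)+1) div 2) - 1)"
proof (cases "odd j")
  case True
  then show ?thesis by (auto elim!: oddE)
next
  case False
  then obtain i where i: "j = 2*i" using assms(2) by (auto elim!: evenE)
  then have "i \<in> {1..n}" using assms(2) by auto
  moreover have "(j+1) div 2 = i" using i by auto
  ultimately show ?thesis using assms i by auto
qed

lemma Hn_inv: assumes "\<sigma> \<in> carrier (Hn n)"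
  shows "Hilbert_Choice.inv \<sigma> permutes {1..2*n}"
    "Hilbert_Choice.inv \<sigma> (w0 n j) = w0 n (Hilbert_Choice.inv \<sigma> j)"
proof -
  have p: "\<sigma> permutes {1..2*n}" and c: "\<sigma> \<circ> w0 n = w0 n \<circ> \<sigma>" using assms by (auto simp: Hn_carrier)
  show "Hilbert_Choice.inv \<sigma> permutes {1..2*n}" using p by (rule permutes_inv)
  have "\<sigma> (w0 n (Hilbert_Choice.inv \<sigma> j)) = w0 n j"
    using fun_cong[OF c, of "Hilbert_Choice.inv \<sigma> j"] permutes_inverses(1)[OF p] by simp
  then show "Hilbert_Choice.inv \<sigma> (w0 n j) = w0 n (Hilbert_Choice.inv \<sigma> j)"
    using permutes_inv_eq[OF p] by metis
qed

lemma permutes_in: "p permutes S \<Longrightarrow> x \<in> S \<Longrightarrow> p x \<in> S"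
  by (simp add: permutes_in_image)

lemma HG_closed: assumes "x \<in> carrier (HG G n)" "y \<in> carrier (HG G n)" "group G"
  shows "x \<otimes>\<^bsub>HG G n\<^esub> y \<in> carrier (HG G n)"
proof -
  obtain g \<sigma> where x: "x = (g,\<sigma>)" by fastforce
  obtain h \<tau> where y: "y = (h,\<tau>)" by fastforce
  have g: "g \<in> {1..2*n} \<rightarrow>\<^sub>E carrier G" "\<forall>i\<in>{1..n}. g (2*i - 1) = g (2*i)" "\<sigma> \<in> carrier (Hn n)"
    using assms x by (auto simp: HG_carrier)
  have h: "h \<in> {1..2*n} \<rightarrow>\<^sub>E carrier G" "\<forall>i\<in>{1..n}. h (2*i - 1) = h (2*i)" "\<tau> \<in> carrier (Hn n)"
    using assms y by (auto simp: HG_carrier)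
  have ip: "Hilbert_Choice.inv \<sigma> permutes {1..2*n}" using Hn_inv g by auto
  have "(\<lambda>i\<in>{1..2*n}. g i \<otimes>\<^bsub>G\<^esub> h (Hilbert_Choice.inv \<sigma> i)) \<in> {1..2*n} \<rightarrow>\<^sub>E carrier G"
    using g h permutes_in[OF ip] group.is_monoid[OF assms(3)] by (auto intro!: monoid.m_closed)
  moreover have "\<forall>i\<in>{1..n}. h (Hilbert_Choice.inv \<sigma> (2*i - 1)) = h (Hilbert_Choice.inv \<sigma> (2*i))"
  proof
    fix i assume i: "i \<in> {1..n}"
    have "Hilbert_Choice.inv \<sigma> (2*i) = w0 n (Hilbert_Choice.inv \<sigma> (2*i-1))"
      using Hn_inv(2)[OF g(3)] w0_odd[OF i] by metis
    moreover have "2*i-1 \<in> {1..2*n}" using i by auto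
    then have "Hilbert_Choice.inv \<sigma> (2*i-1) \<in> {1..2*n}" using permutes_in[OF ip] by blast
    ultimately show "h (Hilbert_Choice.inv \<sigma> (2*i - 1)) = h (Hilbert_Choice.inv \<sigma> (2*i))"
      using pair_w0[OF h(2)] by metis
  qed
  moreover have "\<sigma> \<circ> \<tau> \<in> carrier (Hn n)"
  proof -
    have "\<sigma> permutes {1..2*n}" "\<sigma> \<circ> w0 n = w0 n \<circ> \<sigma>" "\<tau> permutes {1..2*n}" "\<tau> \<circ> w0 n = w0 n \<circ> \<tau>"
      using g h by (auto simp: Hn_carrier)
    then show ?thesis by (auto simp: Hn_carrier permutes_compose comp_assoc) (metis comp_assoc)
  qed
  ultimately show ?thesis using x y g h by (auto simp: HG_carrier HG_mult)
qed

lemma lc_nz: "c \<in> lin_chars K \<Longrightarrow> x \<in> carrier K \<Longrightarrow> c x \<noteq> 0"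
  unfolding lin_chars_def by auto
lemma lc_mult: "c \<in> lin_chars K \<Longrightarrow> x \<in> carrier K \<Longrightarrow> y \<in> carrier K \<Longrightarrow> c (x \<otimes>\<^bsub>K\<^esub> y) = c x * c y"
  unfolding lin_chars_def by auto
lemma lc_out: "c \<in> lin_chars K \<Longrightarrow> x \<notin> carrier K \<Longrightarrow> c x = undefined"
  unfolding lin_chars_def by auto

lemma lc_one: assumes "monoid K" "c \<in> lin_chars K" shows "c \<one>\<^bsub>K\<^esub> = 1"
proof -
  have "c \<one>\<^bsub>K\<^esub> = c \<one>\<^bsub>K\<^esub> * c \<one>\<^bsub>K\<^esub>" using lc_mult[OF assms(2), of "\<one>\<^bsub>K\<^esub>" "\<one>\<^bsub>K\<^esub>"] assms(1)
    by (simp add: monoid.one_closed monoid.l_one)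
  moreover have "c \<one>\<^bsub>K\<^esub> \<noteq> 0" using lc_nz[OF assms(2)] assms(1) monoid.one_closed by blast
  ultimately show ?thesis by (metis mult_cancel_left1)
qed

lemma foldr_xi: assumes "group G" "\<xi> \<in> lin_chars G" "\<forall>i\<in>set xs. f i \<in> carrier G"
  shows "foldr (\<lambda>i a. f i \<otimes>\<^bsub>G\<^esub> a) xs \<one>\<^bsub>G\<^esub> \<in> carrier G \<and>
    \<xi> (foldr (\<lambda>i a. f i \<otimes>\<^bsub>G\<^esub> a) xs \<one>\<^bsub>G\<^esub>) = prod_list (map (\<lambda>i. \<xi> (f i)) xs)"
  using assms(3)
proof (induction xs)
  case Nil
  then show ?case using lc_one[OF group.is_monoid[OF assms(1)] assms(2)] group.is_monoid[OF assms(1)]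
    by (simp add: monoid.one_closed)
next
  case (Cons a xs)
  then show ?case using lc_mult[OF assms(2)] group.is_monoid[OF assms(1)] by (simp add: monoid.m_closed)
qed

lemma my_pl: "distinct xs \<Longrightarrow> prod_list (map f xs) = (prod f (set xs) :: complex)"
  by (induct xs) simp_all

lemma oprod_xi: assumes "group G" "\<xi> \<in> lin_chars G" "\<forall>i\<in>{1..n}. f i \<in> carrier G"
  shows "\<xi> (oprod G f n) = (\<Prod>i\<in>{1..n}. \<xi> (f i))"
proof -
  have s: "set [1..<Suc n] = {1..n}" by auto
  have A: "\<forall>i\<in>set [1..<Suc n]. f i \<in> carrier G" using assms(3) s by blast
  have "\<xi> (oprod G f n) = prod_list (map (\<lambda>i. \<xi> (f i)) [1..<Suc n])"
    unfolding oprod_def using foldr_xi[OF assms(1,2) A] by blast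
  also have "\<dots> = (\<Prod>i\<in>set [1..<Suc n]. \<xi> (f i))" by (rule my_pl) simp
  finally show ?thesis unfolding s .
qed

lemma same_block: assumes "p \<in> {1..2*n}" "q \<in> {1..2*n}" "(p+1) div 2 = (q+1) div 2"
  shows "q = p \<or> q = w0 n p"
proof -
  have "q = p \<or> (odd p \<and> q = p+1) \<or> (even p \<and> q = p - 1)" using assms(3) by presburger
  then show ?thesis using assms(1) unfolding w0_def by auto
qed

lemma reindex: assumes "\<sigma> \<in> carrier (Hn n)" "\<forall>i\<in>{1..n}. h (2*i - 1) = h (2*i)"
  shows "(\<Prod>i\<in>{1..n}. F (h (Hilbert_Choice.inv \<sigma> (2*i-1)))) = (\<Prod>i\<in>{1..n}. (F (h (2*i-1)) :: complex))"
proof -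
  let ?iv = "Hilbert_Choice.inv \<sigma>"
  define \<beta> where "\<beta> i = (?iv (2*i-1) + 1) div 2" for i
  have ip: "?iv permutes {1..2*n}" using Hn_inv[OF assms(1)] by auto
  have inB: "?iv (2*i-1) \<in> {1..2*n}" if "i \<in> {1..n}" for i
  proof -
    have "2*i-1 \<in> {1..2*n}" using that by auto
    then show ?thesis using permutes_in[OF ip] by blast
  qed
  have hb: "h (?iv (2*i-1)) = h (2 * \<beta> i - 1)" if "i \<in> {1..n}" for i
    using rep_eq[OF assms(2) inB[OF that]] unfolding \<beta>_def .
  have sub: "\<beta> ` {1..n} \<subseteq> {1..n}"
  proof
    fix x assume "x \<in> \<beta> ` {1..n}"
    then obtain i where i: "i \<in> {1..n}" "x = \<beta> i" by auto
    show "x \<in> {1..n}" using inB[OF i(1)] i(2) unfolding \<beta>_def by auto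
  qed
  have inj: "inj_on \<beta> {1..n}"
  proof
    fix i j assume i: "i \<in> {1..n}" and j: "j \<in> {1..n}" and e: "\<beta> i = \<beta> j"
    have ij: "inj ?iv" using permutes_inj[OF ip] .
    from same_block[OF inB[OF i] inB[OF j]] e
    have "?iv (2*j-1) = ?iv (2*i-1) \<or> ?iv (2*j-1) = w0 n (?iv (2*i-1))" unfolding \<beta>_def by auto
    then show "i = j"
    proof
      assume "?iv (2*j-1) = ?iv (2*i-1)"
      then have "2*j-1 = 2*i-1" using ij by (simp add: inj_eq)
      then show ?thesis using i j by auto
    next
      assume "?iv (2*j-1) = w0 n (?iv (2*i-1))"
      also have "\<dots> = ?iv (w0 n (2*i-1))" using Hn_inv(2)[OF assms(1)] by metis
      also have "\<dots> = ?iv (2*i)" using w0_odd[OF i] by simp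
      finally have "2*j-1 = 2*i" using ij by (simp add: inj_eq)
      then show ?thesis using j by presburger
    qed
  qed
  have bij: "bij_betw \<beta> {1..n} {1..n}"
    using endo_inj_surj[OF _ sub inj] inj by (simp add: bij_betw_def)
  have "(\<Prod>i\<in>{1..n}. F (h (?iv (2*i-1)))) = (\<Prod>i\<in>{1..n}. F (h (2 * \<beta> i - 1)))"
    using hb by (intro prod.cong) auto
  also have "\<dots> = (\<Prod>i\<in>{1..n}. F (h (2*i-1)))"
    using prod.reindex_bij_betw[OF bij, of "\<lambda>i. F (h (2*i-1))"] .
  finally show ?thesis .
qed

lemma gB: assumes "g \<in> {1..2*n} \<rightarrow>\<^sub>E carrier G" "(i::nat) \<in> {1..n}" shows "g (2*i-1) \<in> carrier G"
proof -
  have "2*i-1 \<in> {1..2*n}" using assms(2) by auto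
  then show ?thesis using assms(1) by (blast intro: PiE_mem)
qed

lemma Theta_val: assumes "group G" "\<xi> \<in> lin_chars G" "(g,\<sigma>) \<in> carrier (HG G n)"
  shows "Theta G n \<xi> \<pi> (g,\<sigma>) = (\<Prod>i\<in>{1..n}. \<xi> (g (2*i-1))) * \<pi> \<sigma>"
proof -
  have "g \<in> {1..2*n} \<rightarrow>\<^sub>E carrier G" using assms(3) by (auto simp: HG_carrier)
  then have "\<forall>i\<in>{1..n}. g (2*i-1) \<in> carrier G" using gB by blast
  from oprod_xi[OF assms(1,2) this] show ?thesis using assms(3) unfolding Theta_def by simp
qed

lemma Theta_lc: assumes "group G" "\<xi> \<in> lin_chars G" "\<pi> \<in> lin_chars (Hn n)"
  shows "Theta G n \<xi> \<pi> \<in> lin_chars (HG G n)"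
proof -
  have nz: "Theta G n \<xi> \<pi> x \<noteq> 0" if x: "x \<in> carrier (HG G n)" for x
  proof -
    obtain g \<sigma> where gs: "x = (g,\<sigma>)" by fastforce
    have g: "g \<in> {1..2*n} \<rightarrow>\<^sub>E carrier G" "\<sigma> \<in> carrier (Hn n)" using x gs by (auto simp: HG_carrier)
    have "\<forall>i\<in>{1..n}. \<xi> (g (2*i-1)) \<noteq> 0" using gB[OF g(1)] lc_nz[OF assms(2)] by blast
    then have "(\<Prod>i\<in>{1..n}. \<xi> (g (2*i-1))) \<noteq> 0" by simp
    then show ?thesis using Theta_val[OF assms(1,2)] x gs lc_nz[OF assms(3) g(2)] by simp
  qed
  have mu: "Theta G n \<xi> \<pi> (x \<otimes>\<^bsub>HG G n\<^esub> y) = Theta G n \<xi> \<pi> x * Theta G n \<xi> \<pi> y"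
    if x: "x \<in> carrier (HG G n)" and y: "y \<in> carrier (HG G n)" for x y
  proof -
    obtain g \<sigma> where gs: "x = (g,\<sigma>)" by fastforce
    obtain h \<tau> where ht: "y = (h,\<tau>)" by fastforce
    have g: "g \<in> {1..2*n} \<rightarrow>\<^sub>E carrier G" "\<sigma> \<in> carrier (Hn n)" using x gs by (auto simp: HG_carrier)
    have h: "h \<in> {1..2*n} \<rightarrow>\<^sub>E carrier G" "\<forall>i\<in>{1..n}. h (2*i - 1) = h (2*i)" "\<tau> \<in> carrier (Hn n)"
      using y ht by (auto simp: HG_carrier)
    have ip: "Hilbert_Choice.inv \<sigma> permutes {1..2*n}" using Hn_inv g by auto
    define k where "k = (\<lambda>i\<in>{1..2*n}. g i \<otimes>\<^bsub>G\<^esub> h (Hilbert_Choice.inv \<sigma> i))"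
    have xy: "x \<otimes>\<^bsub>HG G n\<^esub> y = (k, \<sigma> \<circ> \<tau>)" using gs ht by (simp add: HG_mult k_def)
    have cl: "(k, \<sigma> \<circ> \<tau>) \<in> carrier (HG G n)" using HG_closed[OF x y assms(1)] xy by simp
    have ki: "\<xi> (k (2*i-1)) = \<xi> (g (2*i-1)) * \<xi> (h (Hilbert_Choice.inv \<sigma> (2*i-1)))" if i: "i \<in> {1..n}" for i
    proof -
      have b: "2*i-1 \<in> {1..2*n}" using i by auto
      then have "Hilbert_Choice.inv \<sigma> (2*i-1) \<in> {1..2*n}" using permutes_in[OF ip] by blast
      then have m: "g (2*i-1) \<in> carrier G" "h (Hilbert_Choice.inv \<sigma> (2*i-1)) \<in> carrier G"
        using b g(1) h(1) by (blast intro: PiE_mem)+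
      have "k (2*i-1) = g (2*i-1) \<otimes>\<^bsub>G\<^esub> h (Hilbert_Choice.inv \<sigma> (2*i-1))" using b unfolding k_def by simp
      then show ?thesis using lc_mult[OF assms(2) m] by simp
    qed
    have "Theta G n \<xi> \<pi> (x \<otimes>\<^bsub>HG G n\<^esub> y) = (\<Prod>i\<in>{1..n}. \<xi> (k (2*i-1))) * \<pi> (\<sigma> \<circ> \<tau>)"
      using Theta_val[OF assms(1,2) cl] xy by simp
    also have "(\<Prod>i\<in>{1..n}. \<xi> (k (2*i-1))) = (\<Prod>i\<in>{1..n}. \<xi> (g (2*i-1))) * (\<Prod>i\<in>{1..n}. \<xi> (h (Hilbert_Choice.inv \<sigma> (2*i-1))))"
      using ki by (simp add: prod.distrib)
    also have "(\<Prod>i\<in>{1..n}. \<xi> (h (Hilbert_Choice.inv \<sigma> (2*i-1)))) = (\<Prod>i\<in>{1..n}. \<xi> (h (2*i-1)))"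
      by (rule reindex[OF g(2) h(2)])
    also have "\<pi> (\<sigma> \<circ> \<tau>) = \<pi> \<sigma> * \<pi> \<tau>" using lc_mult[OF assms(3) g(2) h(3)] by (simp add: Hn_mult)
    finally show ?thesis using Theta_val[OF assms(1,2)] x y gs ht by simp
  qed
  show ?thesis unfolding lin_chars_def using nz mu by (auto simp: Theta_def)
qed


definition tk :: "nat \<Rightarrow> nat \<Rightarrow> nat" where
  "tk k i = (if i \<in> {1,2} then i + 2*k - 2 else if i \<in> {2*k-1, 2*k} then i + 2 - 2*k else i)"

lemma tk_tk: "k \<ge> 1 \<Longrightarrow> tk k (tk k i) = i"
  unfolding tk_def by (auto; arith)

lemma tk_out: "k \<in> {1..n} \<Longrightarrow> i \<notin> {1..2*n} \<Longrightarrow> tk k i = i"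
  unfolding tk_def by auto

lemma tk_perm: assumes "k \<in> {1..n}" shows "tk k permutes {1..2*n}"
  unfolding permutes_def
proof (intro conjI allI impI)
  fix x assume "x \<notin> {1..2*n}" then show "tk k x = x" using tk_out assms by blast
next
  fix y show "\<exists>!x. tk k x = y"
    using tk_tk[of k] assms by (metis atLeastAtMost_iff)
qed

definition swb :: "nat \<Rightarrow> nat \<Rightarrow> nat" where "swb k m = (if m = 1 then k else if m = k then 1 else m)"

lemma tk_odd: "k \<in> {1..n} \<Longrightarrow> m \<in> {1..n} \<Longrightarrow> tk k (2*m-1) = 2 * swb k m - 1"
  unfolding tk_def swb_def by (auto; arith)
lemma tk_even: "k \<in> {1..n} \<Longrightarrow> m \<in> {1..n} \<Longrightarrow> tk k (2*m) = 2 * swb k m"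
  unfolding tk_def swb_def by (auto; arith)
lemma swb_in: "k \<in> {1..n} \<Longrightarrow> m \<in> {1..n} \<Longrightarrow> swb k m \<in> {1..n}"
  unfolding swb_def by auto

lemma B_cases: assumes "(i::nat) \<in> {1..2*n}"
  obtains m where "m \<in> {1..n}" "i = 2*m-1" | m where "m \<in> {1..n}" "i = 2*m"
proof (cases "odd i")
  case True
  then obtain q where "i = 2*q+1" by (auto elim!: oddE)
  then show ?thesis using that(1)[of "q+1"] assms by auto
next
  case False
  then obtain q where "i = 2*q" by (auto elim!: evenE)
  then show ?thesis using that(2)[of q] assms by auto
qed

lemma tk_w0: assumes "k \<in> {1..n}" shows "tk k (w0 n i) = w0 n (tk k i)"
proof (cases "i \<in> {1..2*n}")
  case False
  then have "w0 n i = i" unfolding w0_def by auto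
  then show ?thesis using tk_out[OF assms False] by simp
next
  case True
  then show ?thesis
  proof (cases rule: B_cases)
    case (1 m)
    then show ?thesis using tk_odd[OF assms] tk_even[OF assms] swb_in[OF assms] w0_odd w0_even by simp
  next
    case (2 m)
    then show ?thesis using tk_odd[OF assms] tk_even[OF assms] swb_in[OF assms] w0_odd w0_even by simp
  qed
qed

lemma tk_blk: assumes "k \<in> {1..n}" "i \<in> {1..2*n}"
  shows "((tk k i + 1) div 2 = 1) = ((i+1) div 2 = k)"
  using assms(2)
proof (cases rule: B_cases)
  case (1 m)
  then show ?thesis using tk_odd[OF assms(1) 1(1)] unfolding swb_def by auto
next
  case (2 m)
  then show ?thesis using tk_even[OF assms(1) 2(1)] unfolding swb_def by auto
qed


lemma Hn_closed: assumes "\<sigma> \<in> carrier (Hn n)" "\<tau> \<in> carrier (Hn n)" shows "\<sigma> \<circ> \<tau> \<in> carrier (Hn n)"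
proof -
  have "\<sigma> permutes {1..2*n}" "\<sigma> \<circ> w0 n = w0 n \<circ> \<sigma>" "\<tau> permutes {1..2*n}" "\<tau> \<circ> w0 n = w0 n \<circ> \<tau>"
    using assms by (auto simp: Hn_carrier)
  then show ?thesis by (auto simp: Hn_carrier permutes_compose comp_assoc) (metis comp_assoc)
qed

lemma id_Hn: "id \<in> carrier (Hn n)"
  by (simp add: Hn_carrier permutes_id)

lemma tk_Hn: assumes "k \<in> {1..n}" shows "tk k \<in> carrier (Hn n)"
  using tk_perm[OF assms] tk_w0[OF assms] by (auto simp: Hn_carrier fun_eq_iff)

lemma tk_inv: assumes "k \<in> {1..n}" shows "Hilbert_Choice.inv (tk k) = tk k"
  using assms by (intro permutes_invI[OF tk_perm[OF assms]]) (auto simp: tk_tk tk_out)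

lemma rnot: "x \<notin> A \<Longrightarrow> restrict f A x = undefined" by simp

definition oneF :: "('a, 'b) monoid_scheme \<Rightarrow> nat \<Rightarrow> nat \<Rightarrow> 'a" where
  "oneF G n = (\<lambda>i\<in>{1..2*n}. \<one>\<^bsub>G\<^esub>)"
definition blk :: "('a, 'b) monoid_scheme \<Rightarrow> nat \<Rightarrow> 'a \<Rightarrow> nat \<Rightarrow> nat \<Rightarrow> 'a" where
  "blk G n a k = (\<lambda>i\<in>{1..2*n}. if (i+1) div 2 = k then a else \<one>\<^bsub>G\<^esub>)"
definition trunc :: "('a, 'b) monoid_scheme \<Rightarrow> nat \<Rightarrow> (nat \<Rightarrow> 'a) \<Rightarrow> nat \<Rightarrow> nat \<Rightarrow> 'a" where
  "trunc G n g k = (\<lambda>i\<in>{1..2*n}. if i \<le> 2*k then g i else \<one>\<^bsub>G\<^esub>)"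

lemma oneF_carrier: assumes "group G" "\<sigma> \<in> carrier (Hn n)" shows "(oneF G n, \<sigma>) \<in> carrier (HG G n)"
  using assms by (auto simp: HG_carrier oneF_def group.is_monoid monoid.one_closed)

lemma div_facts: "(i::nat) \<ge> 1 \<Longrightarrow> (2*i-1+1) div 2 = i" "(2*(i::nat)+1) div 2 = i"
  by auto

lemma blk_carrier: assumes "group G" "a \<in> carrier G" "\<sigma> \<in> carrier (Hn n)"
  shows "(blk G n a k, \<sigma>) \<in> carrier (HG G n)"
  using assms by (auto simp: HG_carrier blk_def group.is_monoid monoid.one_closed div_facts)

lemma trunc_carrier: assumes "group G" "(g,\<sigma>) \<in> carrier (HG G n)"
  shows "(trunc G n g k, id) \<in> carrier (HG G n)"
proof -
  have g: "g \<in> {1..2*n} \<rightarrow>\<^sub>E carrier G" "\<forall>i\<in>{1..n}. g (2*i - 1) = g (2*i)"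
    using assms(2) by (auto simp: HG_carrier)
  have one: "\<one>\<^bsub>G\<^esub> \<in> carrier G" using assms(1) by (simp add: group.is_monoid monoid.one_closed)
  have "\<forall>i\<in>{1..2*n}. (if i \<le> 2*k then g i else \<one>\<^bsub>G\<^esub>) \<in> carrier G"
    using PiE_mem[OF g(1)] one by simp
  then have "trunc G n g k \<in> {1..2*n} \<rightarrow>\<^sub>E carrier G"
    unfolding trunc_def by (simp only: restrict_PiE_iff)
  moreover have "\<forall>i\<in>{1..n}. trunc G n g k (2*i - 1) = trunc G n g k (2*i)"
  proof
    fix i assume i: "i \<in> {1..n}"
    have "(2*i-1 \<le> 2*k) = (2*i \<le> 2*k)" using i by auto
    then show "trunc G n g k (2*i - 1) = trunc G n g k (2*i)" using i g(2) by (auto simp: trunc_def)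
  qed
  ultimately show ?thesis using id_Hn by (auto simp: HG_carrier)
qed

lemma M1: assumes "group G" "g \<in> {1..2*n} \<rightarrow>\<^sub>E carrier G"
  shows "(g, id) \<otimes>\<^bsub>HG G n\<^esub> (oneF G n, \<sigma>) = (g, \<sigma>)"
proof -
  have "(\<lambda>i\<in>{1..2*n}. g i \<otimes>\<^bsub>G\<^esub> oneF G n i) = g"
  proof
    fix i show "(\<lambda>i\<in>{1..2*n}. g i \<otimes>\<^bsub>G\<^esub> oneF G n i) i = g i"
    proof (cases "i \<in> {1..2*n}")
      case True
      then have "g i \<in> carrier G" using PiE_mem[OF assms(2)] by blast
      then show ?thesis using True assms(1) by (simp add: oneF_def group.is_monoid monoid.r_one)
    next
      case False
      then show ?thesis by (simp only: rnot[OF False] PiE_arb[OF assms(2) False])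
    qed
  qed
  then show ?thesis by (simp add: HG_mult inv_id)
qed

lemma M2: assumes "group G" "\<sigma> \<in> carrier (Hn n)"
  shows "(oneF G n, \<sigma>) \<otimes>\<^bsub>HG G n\<^esub> (oneF G n, \<tau>) = (oneF G n, \<sigma> \<circ> \<tau>)"
proof -
  have ip: "Hilbert_Choice.inv \<sigma> permutes {1..2*n}" using Hn_inv assms(2) by auto
  have "(\<lambda>i\<in>{1..2*n}. oneF G n i \<otimes>\<^bsub>G\<^esub> oneF G n (Hilbert_Choice.inv \<sigma> i)) = oneF G n"
  proof
    fix i show "(\<lambda>i\<in>{1..2*n}. oneF G n i \<otimes>\<^bsub>G\<^esub> oneF G n (Hilbert_Choice.inv \<sigma> i)) i = oneF G n i"
      using assms permutes_in[OF ip, of i]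
      by (cases "i \<in> {1..2*n}") (auto simp: oneF_def group.is_monoid monoid.r_one monoid.one_closed)
  qed
  then show ?thesis by (simp add: HG_mult)
qed

lemma M3: assumes "group G" "a \<in> carrier G" "b \<in> carrier G"
  shows "(blk G n a 1, id) \<otimes>\<^bsub>HG G n\<^esub> (blk G n b 1, id) = (blk G n (a \<otimes>\<^bsub>G\<^esub> b) 1, id)"
proof -
  have "(\<lambda>i\<in>{1..2*n}. blk G n a 1 i \<otimes>\<^bsub>G\<^esub> blk G n b 1 i) = blk G n (a \<otimes>\<^bsub>G\<^esub> b) 1"
  proof
    fix i show "(\<lambda>i\<in>{1..2*n}. blk G n a 1 i \<otimes>\<^bsub>G\<^esub> blk G n b 1 i) i = blk G n (a \<otimes>\<^bsub>G\<^esub> b) 1 i"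
    proof (cases "i \<in> {1..2*n}")
      case True
      then show ?thesis using assms by (simp add: blk_def group.is_monoid monoid.r_one monoid.one_closed)
    next
      case False
      then show ?thesis unfolding blk_def by (simp only: rnot[OF False])
    qed
  qed
  then show ?thesis by (simp add: HG_mult inv_id)
qed

lemma M5: assumes "group G" "a \<in> carrier G" "k \<in> {1..n}"
  shows "(oneF G n, tk k) \<otimes>\<^bsub>HG G n\<^esub> (blk G n a 1, id) = (blk G n a k, tk k)"
proof -
  have "(\<lambda>i\<in>{1..2*n}. oneF G n i \<otimes>\<^bsub>G\<^esub> blk G n a 1 (tk k i)) = blk G n a k"
  proof
    fix i show "(\<lambda>i\<in>{1..2*n}. oneF G n i \<otimes>\<^bsub>G\<^esub> blk G n a 1 (tk k i)) i = blk G n a k i"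
    proof (cases "i \<in> {1..2*n}")
      case True
      then have "tk k i \<in> {1..2*n}" using permutes_in[OF tk_perm[OF assms(3)]] by blast
      then show ?thesis using True assms tk_blk[OF assms(3) True]
        by (auto simp: oneF_def blk_def group.is_monoid monoid.l_one monoid.one_closed)
    next
      case False then show ?thesis unfolding blk_def by (simp only: rnot[OF False])
    qed
  qed
  then show ?thesis by (simp add: HG_mult tk_inv[OF assms(3)])
qed

lemma M4: assumes "group G" "(g,\<sigma>) \<in> carrier (HG G n)" "k < n"
  shows "(trunc G n g k, id) \<otimes>\<^bsub>HG G n\<^esub> (blk G n (g (2*k+1)) (k+1), id) = (trunc G n g (k+1), id)"
proof -
  have g: "g \<in> {1..2*n} \<rightarrow>\<^sub>E carrier G" "\<forall>i\<in>{1..n}. g (2*i - 1) = g (2*i)"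
    using assms(2) by (auto simp: HG_carrier)
  have M: "monoid G" using assms(1) by (rule group.is_monoid)
  have k1: "k+1 \<in> {1..n}" using assms(3) by auto
  have gk: "g (2*k+1) \<in> carrier G" using gB[OF g(1) k1] by simp
  have "g (2*(k+1)-1) = g (2*(k+1))" using g(2) k1 by blast
  then have gk2: "g (2*k+2) = g (2*k+1)" by simp
  have "(\<lambda>i\<in>{1..2*n}. trunc G n g k i \<otimes>\<^bsub>G\<^esub> blk G n (g (2*k+1)) (k+1) i) = trunc G n g (k+1)"
  proof
    fix i show "(\<lambda>i\<in>{1..2*n}. trunc G n g k i \<otimes>\<^bsub>G\<^esub> blk G n (g (2*k+1)) (k+1) i) i = trunc G n g (k+1) i"
    proof (cases "i \<in> {1..2*n}")
      case True
      then have gi: "g i \<in> carrier G" using g(1) by (blast intro: PiE_mem)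
      consider "i \<le> 2*k" | "i = 2*k+1" | "i = 2*k+2" | "i > 2*k+2" by linarith
      then show ?thesis
      proof cases
        case 1
        then have "(i+1) div 2 \<noteq> k+1" by auto
        then show ?thesis using 1 True gi M by (simp add: trunc_def blk_def monoid.r_one)
      next
        case 2
        then show ?thesis using True gk M by (simp add: trunc_def blk_def monoid.l_one)
      next
        case 3
        then show ?thesis using True gk gk2 M by (simp add: trunc_def blk_def monoid.l_one)
      next
        case 4
        then have "(i+1) div 2 \<noteq> k+1" by auto
        then show ?thesis using 4 True M by (simp add: trunc_def blk_def monoid.l_one monoid.one_closed)
      qed
    next
      case False then show ?thesis unfolding trunc_def by (simp only: rnot[OF False])
    qed
  qed
  then show ?thesis by (simp add: HG_mult inv_id)
qed


lemma converse: assumes G: "group G" and n: "n \<ge> 1" and chi: "\<chi> \<in> lin_chars (HG G n)"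
  shows "\<exists>\<xi> \<pi>. \<chi> = Theta G n \<xi> \<pi> \<and> \<xi> \<in> lin_chars G \<and> \<pi> \<in> lin_chars (Hn n)"
proof -
  define \<xi> where "\<xi> = (\<lambda>a\<in>carrier G. \<chi> (blk G n a 1, id))"
  define \<pi> where "\<pi> = (\<lambda>\<sigma>\<in>carrier (Hn n). \<chi> (oneF G n, \<sigma>))"
  have M: "monoid G" using G by (rule group.is_monoid)
  have o1: "(oneF G n, id) \<in> carrier (HG G n)" using oneF_carrier[OF G id_Hn] .
  have chi1: "\<chi> (oneF G n, id) = 1"
  proof -
    have "\<chi> (oneF G n, id) = \<chi> (oneF G n, id) * \<chi> (oneF G n, id)"
      using lc_mult[OF chi o1 o1] M2[OF G id_Hn, where n=n and \<tau>=id] by simp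
    moreover have "\<chi> (oneF G n, id) \<noteq> 0" using lc_nz[OF chi o1] .
    ultimately show ?thesis by (metis mult_cancel_left1)
  qed
  have xi: "\<xi> \<in> lin_chars G"
    unfolding lin_chars_def
  proof (intro CollectI conjI ballI)
    show "\<xi> \<in> carrier G \<rightarrow>\<^sub>E UNIV - {0}"
      unfolding \<xi>_def using lc_nz[OF chi blk_carrier[OF G _ id_Hn]] by auto
  next
    fix x y assume x: "x \<in> carrier G" and y: "y \<in> carrier G"
    have xy: "x \<otimes>\<^bsub>G\<^esub> y \<in> carrier G" using M x y by (simp add: monoid.m_closed)
    show "\<xi> (x \<otimes>\<^bsub>G\<^esub> y) = \<xi> x * \<xi> y"
      using lc_mult[OF chi blk_carrier[OF G x id_Hn, where k=1] blk_carrier[OF G y id_Hn, where k=1]] M3[OF G x y, of n]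
      unfolding \<xi>_def using x y xy by simp
  qed
  have pi: "\<pi> \<in> lin_chars (Hn n)"
    unfolding lin_chars_def
  proof (intro CollectI conjI ballI)
    show "\<pi> \<in> carrier (Hn n) \<rightarrow>\<^sub>E UNIV - {0}"
      unfolding \<pi>_def using lc_nz[OF chi oneF_carrier[OF G]] by auto
  next
    fix x y assume x: "x \<in> carrier (Hn n)" and y: "y \<in> carrier (Hn n)"
    show "\<pi> (x \<otimes>\<^bsub>Hn n\<^esub> y) = \<pi> x * \<pi> y"
      using lc_mult[OF chi oneF_carrier[OF G x] oneF_carrier[OF G y]] M2[OF G x, where \<tau>=y] Hn_closed[OF x y]
      unfolding \<pi>_def using x y by (simp add: Hn_mult)
  qed
  have blkk: "\<chi> (blk G n a k, id) = \<chi> (blk G n a 1, id)" if a: "a \<in> carrier G" and k: "k \<in> {1..n}" for a k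
  proof -
    have t: "tk k \<in> carrier (Hn n)" using tk_Hn[OF k] .
    have ot: "(oneF G n, tk k) \<in> carrier (HG G n)" using oneF_carrier[OF G t] .
    have bk: "(blk G n a k, id) \<in> carrier (HG G n)" using blk_carrier[OF G a id_Hn] .
    have b1: "(blk G n a 1, id) \<in> carrier (HG G n)" using blk_carrier[OF G a id_Hn] .
    have ga: "blk G n a j \<in> {1..2*n} \<rightarrow>\<^sub>E carrier G" for j
      using blk_carrier[OF G a id_Hn, where k=j and n=n] by (auto simp: HG_carrier)
    have e1: "\<chi> (blk G n a k, tk k) = \<chi> (oneF G n, tk k) * \<chi> (blk G n a 1, id)"
      using lc_mult[OF chi ot b1] M5[OF G a k] by simp
    have e2: "\<chi> (blk G n a k, tk k) = \<chi> (blk G n a k, id) * \<chi> (oneF G n, tk k)"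
      using lc_mult[OF chi bk ot] M1[OF G ga, where \<sigma>="tk k"] by simp
    have "\<chi> (oneF G n, tk k) \<noteq> 0" using lc_nz[OF chi ot] .
    then show ?thesis using e1 e2 by (simp add: mult.commute)
  qed
  have main: "\<chi> (g,\<sigma>) = Theta G n \<xi> \<pi> (g,\<sigma>)" if x: "(g,\<sigma>) \<in> carrier (HG G n)" for g \<sigma>
  proof -
    have g: "g \<in> {1..2*n} \<rightarrow>\<^sub>E carrier G" "\<forall>i\<in>{1..n}. g (2*i - 1) = g (2*i)" "\<sigma> \<in> carrier (Hn n)"
      using x by (auto simp: HG_carrier)
    have tr: "k \<le> n \<Longrightarrow> \<chi> (trunc G n g k, id) = (\<Prod>i\<in>{1..k}. \<xi> (g (2*i-1)))" for k
    proof (induction k)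
      case 0
      have "trunc G n g 0 = oneF G n"
      proof
        fix i show "trunc G n g 0 i = oneF G n i" unfolding trunc_def oneF_def by auto
      qed
      then show ?case using chi1 by (simp add: id_def)
    next
      case (Suc k)
      then have kn: "k < n" by simp
      have k1: "k+1 \<in> {1..n}" using kn by auto
      have gk: "g (2*k+1) \<in> carrier G" using gB[OF g(1) k1] by simp
      have "\<chi> (trunc G n g (Suc k), id) = \<chi> (trunc G n g k, id) * \<chi> (blk G n (g (2*k+1)) (k+1), id)"
        using lc_mult[OF chi trunc_carrier[OF G x, where k=k] blk_carrier[OF G gk id_Hn, where k="k+1"]] M4[OF G x kn] by simp
      also have "\<chi> (blk G n (g (2*k+1)) (k+1), id) = \<xi> (g (2*(Suc k)-1))"
        using blkk[OF gk k1] gk unfolding \<xi>_def by simp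
      also have "\<chi> (trunc G n g k, id) = (\<Prod>i\<in>{1..k}. \<xi> (g (2*i-1)))" using Suc kn by (simp add: id_def)
      finally show ?case by (simp add: atLeastAtMostSuc_conv mult.commute)
    qed
    have "trunc G n g n = g"
    proof
      fix i show "trunc G n g n i = g i"
      proof (cases "i \<in> {1..2*n}")
        case True then show ?thesis by (simp add: trunc_def)
      next
        case False then show ?thesis unfolding trunc_def by (simp only: rnot[OF False] PiE_arb[OF g(1) False])
      qed
    qed
    then have chg: "\<chi> (g, id) = (\<Prod>i\<in>{1..n}. \<xi> (g (2*i-1)))" using tr[of n] by simp
    have gid: "(g, id) \<in> carrier (HG G n)" using x id_Hn by (auto simp: HG_carrier)
    have "\<chi> (g,\<sigma>) = \<chi> (g,id) * \<chi> (oneF G n, \<sigma>)"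
      using lc_mult[OF chi gid oneF_carrier[OF G g(3)]] M1[OF G g(1), where \<sigma>=\<sigma>] by simp
    also have "\<chi> (oneF G n, \<sigma>) = \<pi> \<sigma>" using g(3) unfolding \<pi>_def by simp
    finally show ?thesis using Theta_val[OF G xi x] chg by (simp add: id_def)
  qed
  have "\<chi> = Theta G n \<xi> \<pi>"
  proof
    fix x show "\<chi> x = Theta G n \<xi> \<pi> x"
    proof (cases "x \<in> carrier (HG G n)")
      case True
      obtain g \<sigma> where "x = (g,\<sigma>)" by fastforce
      then show ?thesis using main True by simp
    next
      case False
      then show ?thesis using lc_out[OF chi False] unfolding Theta_def by (simp only: rnot[OF False])
    qed
  qed
  then show ?thesis using xi pi by blast
qed

theorem proposition4p2:
  fixes G :: "('a, 'b) monoid_scheme" and n :: nat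
  assumes "group G" and "finite (carrier G)" and "n \<ge> 1"
  shows "lin_chars (HG G n) =
    {Theta G n \<xi> \<pi> | \<xi> \<pi>. \<xi> \<in> lin_chars G \<and> \<pi> \<in> lin_chars (Hn n)}"
  using converse[OF assms(1) assms(3)] Theta_lc[OF assms(1)] by blast

end
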